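(* Let $S$ be a functional PTS specification. For all terms $M,N,A,B$ of the $\lambda\Pi/S$ syntax such that the relevant inverse translations are defined: (1) if $M\equiv_{\beta R}N$ then $\varphi(M)\equiv_\beta\varphi(N)$; (2) if $A\equiv_{\beta R}B$ then $\psi(A)\equiv_\beta\psi(B)$.
   Context: $S=(\mathcal S,\mathcal A,\mathcal R)$ is a PTS specification (sorts, axioms $(s_1:s_2)$, rules $(s_1,s_2,s_3)$). Terms are $s\mid x\mid M\,N\mid\lambda x:A.M\mid\Pi x:A.B$ over constants $u_s,\varepsilon_s$ ($s\in\mathcal S$), $\dot s_1$ ($(s_1:s_2)\in\mathcal A$), $\dot\pi_{s_1s_2s_3}$ ($(s_1,s_2,s_3)\in\mathcal R$). $\longrightarrow_{\beta R}$ is the union of $\beta$-reduction and the contextual closure of the rules $\varepsilon_{s_2}\,\dot s_1\longrightarrow u_{s_1}$ ($(s_1:s_2)\in\mathcal A$) and $\varepsilon_{s_3}(\dot\pi_{s_1s_2s_3}AB)\longrightarrow\Pi x:\varepsilon_{s_1}A.\varepsilon_{s_2}(B\,x)$ ($(s_1,s_2,s_3)\in\mathcal R$); $\equiv_{\beta R}$ is the congruence it generates. Inverse translations (partial): $\varphi(\dot s)=s$, $\varphi(\dot\pi_{s_1s_2s_3})=\lambda\alpha:s_1.\lambda\beta:(\alpha\to s_2).\Pi x:\alpha.\beta\,x$, $\varphi(x)=x$, $\varphi(M\,N)=\varphi(M)\varphi(N)$, $\varphi(\lambda x:A.M)=\lambda x:\psi(A).\varphi(M)$; $\psi(u_s)=s$,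 $\psi(\varepsilon_sM)=\varphi(M)$, $\psi(\Pi x:A.B)=\Pi x:\psi(A).\psi(B)$. *)

theory Defs
  imports Main
begin

text \<open>Terms with atoms of type 'a, variables as de Bruijn indices, application,
  typed abstraction and dependent product. The binder of Lam A M and Pi A B binds
  index 0 in the second argument.\<close>

datatype 'a trm =
    Atm 'a
  | Var nat
  | App "'a trm" "'a trm"
  | Lam "'a trm" "'a trm"
  | Pi "'a trm" "'a trm"

fun lift :: "nat \<Rightarrow> 'a trm \<Rightarrow> 'a trm" where
  "lift k (Atm a) = Atm a"
| "lift k (Var i) = (if i < k then Var i else Var (Suc i))"
| "lift k (App M N) = App (lift k M) (lift k N)"
| "lift k (Lam A M) = Lam (lift k A) (lift (Suc k) M)"
| "lift k (Pi A B) = Pi (lift k A) (lift (Suc k) B)"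

fun subst :: "'a trm \<Rightarrow> nat \<Rightarrow> 'a trm \<Rightarrow> 'a trm" where
  "subst (Atm a) k N = Atm a"
| "subst (Var i) k N = (if i < k then Var i else if i = k then N else Var (i - 1))"
| "subst (App M1 M2) k N = App (subst M1 k N) (subst M2 k N)"
| "subst (Lam A M) k N = Lam (subst A k N) (subst M (Suc k) (lift 0 N))"
| "subst (Pi A B) k N = Pi (subst A k N) (subst B (Suc k) (lift 0 N))"

inductive ctxc :: "('a trm \<Rightarrow> 'a trm \<Rightarrow> bool) \<Rightarrow> 'a trm \<Rightarrow> 'a trm \<Rightarrow> bool"
  for r where
  root: "r M N \<Longrightarrow> ctxc r M N"
| appL: "ctxc r M M' \<Longrightarrow> ctxc r (App M N) (App M' N)"
| appR: "ctxc r N N' \<Longrightarrow> ctxc r (App M N) (App M N')"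
| lamL: "ctxc r A A' \<Longrightarrow> ctxc r (Lam A M) (Lam A' M)"
| lamR: "ctxc r M M' \<Longrightarrow> ctxc r (Lam A M) (Lam A M')"
| piL: "ctxc r A A' \<Longrightarrow> ctxc r (Pi A B) (Pi A' B)"
| piR: "ctxc r B B' \<Longrightarrow> ctxc r (Pi A B) (Pi A B')"

inductive beta_root :: "'a trm \<Rightarrow> 'a trm \<Rightarrow> bool" where
  "beta_root (App (Lam A M) N) (subst M 0 N)"

definition beta_step :: "'a trm \<Rightarrow> 'a trm \<Rightarrow> bool" where
  "beta_step = ctxc beta_root"

definition beta_conv :: "'a trm \<Rightarrow> 'a trm \<Rightarrow> bool" where
  "beta_conv = equivclp beta_step"

text \<open>A specification is (S, Ax, Rl): sorts, axioms (s1 : s2), rules (s1, s2, s3).\<close>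
definition pts_spec :: "'s set \<Rightarrow> ('s \<times> 's) set \<Rightarrow> ('s \<times> 's \<times> 's) set \<Rightarrow> bool" where
  "pts_spec S Ax Rl \<longleftrightarrow> Ax \<subseteq> S \<times> S \<and> Rl \<subseteq> S \<times> S \<times> S"

definition functional_pts :: "'s set \<Rightarrow> ('s \<times> 's) set \<Rightarrow> ('s \<times> 's \<times> 's) set \<Rightarrow> bool" where
  "functional_pts S Ax Rl \<longleftrightarrow> pts_spec S Ax Rl
     \<and> (\<forall>s1 s2 s2'. (s1, s2) \<in> Ax \<longrightarrow> (s1, s2') \<in> Ax \<longrightarrow> s2 = s2')
     \<and> (\<forall>s1 s2 s3 s3'. (s1, s2, s3) \<in> Rl \<longrightarrow> (s1, s2, s3') \<in> Rl \<longrightarrow> s3 = s3')"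

text \<open>PTS terms over sorts 's are 's trm (Atm s is the sort s).\<close>

text \<open>Atoms of lambda-Pi/S: the lambda-Pi sorts Type and Kind, and the constants
  u_s, eps_s, dot-s1, dot-pi_{s1 s2 s3}.\<close>
datatype 's lpconst =
    LType | LKind
  | U 's | Eps 's | Dot 's | PiC 's 's 's

type_synonym 's lpterm = "'s lpconst trm"

fun wf_const :: "'s set \<Rightarrow> ('s \<times> 's) set \<Rightarrow> ('s \<times> 's \<times> 's) set \<Rightarrow> 's lpconst \<Rightarrow> bool" where
  "wf_const S Ax Rl LType = True"
| "wf_const S Ax Rl LKind = True"
| "wf_const S Ax Rl (U s) = (s \<in> S)"
| "wf_const S Ax Rl (Eps s) = (s \<in> S)"
| "wf_const S Ax Rl (Dot s1) = (\<exists>s2. (s1, s2) \<in> Ax)"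
| "wf_const S Ax Rl (PiC s1 s2 s3) = ((s1, s2, s3) \<in> Rl)"

fun wf_lp :: "'s set \<Rightarrow> ('s \<times> 's) set \<Rightarrow> ('s \<times> 's \<times> 's) set \<Rightarrow> 's lpterm \<Rightarrow> bool" where
  "wf_lp S Ax Rl (Atm c) = wf_const S Ax Rl c"
| "wf_lp S Ax Rl (Var i) = True"
| "wf_lp S Ax Rl (App M N) = (wf_lp S Ax Rl M \<and> wf_lp S Ax Rl N)"
| "wf_lp S Ax Rl (Lam A M) = (wf_lp S Ax Rl A \<and> wf_lp S Ax Rl M)"
| "wf_lp S Ax Rl (Pi A B) = (wf_lp S Ax Rl A \<and> wf_lp S Ax Rl B)"

text \<open>Root rewrite rules R:
  eps_{s2} (dot s1) --> u_{s1}   for (s1 : s2) in Ax;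
  eps_{s3} (dot-pi_{s1 s2 s3} A B) --> Pi x : eps_{s1} A. eps_{s2} (B x)   for (s1,s2,s3) in Rl.\<close>
inductive R_root :: "('s \<times> 's) set \<Rightarrow> ('s \<times> 's \<times> 's) set \<Rightarrow> 's lpterm \<Rightarrow> 's lpterm \<Rightarrow> bool"
  for Ax Rl where
  ax: "(s1, s2) \<in> Ax \<Longrightarrow> R_root Ax Rl (App (Atm (Eps s2)) (Atm (Dot s1))) (Atm (U s1))"
| rl: "(s1, s2, s3) \<in> Rl \<Longrightarrow>
     R_root Ax Rl (App (Atm (Eps s3)) (App (App (Atm (PiC s1 s2 s3)) A) B))
       (Pi (App (Atm (Eps s1)) A) (App (Atm (Eps s2)) (App (lift 0 B) (Var 0))))"

definition betaR_step :: "('s \<times> 's) set \<Rightarrow> ('s \<times> 's \<times> 's) set \<Rightarrow> 's lpterm \<Rightarrow> 's lpterm \<Rightarrow> bool" where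
  "betaR_step Ax Rl = ctxc (\<lambda>M N. beta_root M N \<or> R_root Ax Rl M N)"

definition betaR_conv :: "('s \<times> 's) set \<Rightarrow> ('s \<times> 's \<times> 's) set \<Rightarrow> 's lpterm \<Rightarrow> 's lpterm \<Rightarrow> bool" where
  "betaR_conv Ax Rl = equivclp (betaR_step Ax Rl)"

text \<open>phi(dot-pi_{s1 s2 s3}) = lambda alpha:s1. lambda beta:(alpha -> s2). Pi x:alpha. beta x,
  written with de Bruijn indices.\<close>
definition phi_pi :: "'s \<Rightarrow> 's \<Rightarrow> 's trm" where
  "phi_pi s1 s2 = Lam (Atm s1) (Lam (Pi (Var 0) (Atm s2)) (Pi (Var 1) (App (Var 1) (Var 0))))"

fun phi :: "'s lpterm \<Rightarrow> 's trm option"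
and psi :: "'s lpterm \<Rightarrow> 's trm option" where
  "phi (Atm (Dot s)) = Some (Atm s)"
| "phi (Atm (PiC s1 s2 s3)) = Some (phi_pi s1 s2)"
| "phi (Atm _) = None"
| "phi (Var x) = Some (Var x)"
| "phi (App M N) = (case (phi M, phi N) of (Some M', Some N') \<Rightarrow> Some (App M' N') | _ \<Rightarrow> None)"
| "phi (Lam A M) = (case (psi A, phi M) of (Some A', Some M') \<Rightarrow> Some (Lam A' M') | _ \<Rightarrow> None)"
| "phi (Pi A B) = None"
| "psi (Atm (U s)) = Some (Atm s)"
| "psi (App (Atm (Eps s)) M) = phi M"
| "psi (Pi A B) = (case (psi A, psi B) of (Some A', Some B') \<Rightarrow> Some (Pi A' B') | _ \<Rightarrow> None)"
| "psi _ = None"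

end

theory Submission
  imports Defs
begin


lemma lift_lift: "i \<le> k \<Longrightarrow> lift (Suc k) (lift i t) = lift i (lift k t)"
  by (induction t arbitrary: i k) auto

lemma lift_subst: "j \<le> i \<Longrightarrow> lift i (subst t j s) = subst (lift (Suc i) t) j (lift i s)"
  by (induction t arbitrary: i j s) (auto simp: lift_lift)

lemma lift_subst_lt: "i \<le> j \<Longrightarrow> lift i (subst t j s) = subst (lift i t) (Suc j) (lift i s)"
  by (induction t arbitrary: i j s) (auto simp: lift_lift)

lemma subst_lift [simp]: "subst (lift k t) k s = t"
  by (induction t arbitrary: k s) auto

lemma subst_subst: "i \<le> j \<Longrightarrow> subst (subst t (Suc j) (lift i v)) i (subst u j v) = subst (subst t i u) j v"
  by (induction t arbitrary: i j u v) (auto simp: lift_lift[symmetric] lift_subst_lt subst_lift)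




lemma psi_App: "psi (App M N) = (case M of Atm (Eps s) \<Rightarrow> phi N | _ \<Rightarrow> None)"
  by (cases M; simp; rename_tac c; case_tac c; simp)

lemma phi_Atm: "phi (Atm c) = (case c of Dot s \<Rightarrow> Some (Atm s) | PiC s1 s2 s3 \<Rightarrow> Some (phi_pi s1 s2) | _ \<Rightarrow> None)"
  by (cases c) auto

lemma psi_Atm: "psi (Atm c) = (case c of U s \<Rightarrow> Some (Atm s) | _ \<Rightarrow> None)"
  by (cases c) auto

lemma psi_Var[simp]: "psi (Var i) = None" and psi_Lam[simp]: "psi (Lam A M) = None"
  by auto

lemma phi_lift:
  "(\<forall>k M'. phi M = Some M' \<longrightarrow> phi (lift k M) = Some (lift k M')) \<and>
   (\<forall>k M'. psi M = Some M' \<longrightarrow> psi (lift k M) = Some (lift k M'))"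
proof (induction M)
  case (Atm c) then show ?case by (cases c) (auto simp: phi_pi_def)
next
  case (App M1 M2) then show ?case
    by (auto simp: psi_App split: option.splits trm.splits lpconst.splits)
qed (auto split: option.splits)

lemma phi_subst:
  fixes M :: "'s lpterm"
  shows "(\<forall>k N N' M'. phi M = Some M' \<longrightarrow> phi N = Some N' \<longrightarrow> phi (subst M k N) = Some (subst M' k N')) \<and>
   (\<forall>k N N' M'. psi M = Some M' \<longrightarrow> phi N = Some N' \<longrightarrow> psi (subst M k N) = Some (subst M' k N'))"
proof (induction M)
  case (Atm c) then show ?case by (cases c) (auto simp: phi_pi_def)
next
  case (App M1 M2) then show ?case
    by (auto simp: psi_App split: option.splits trm.splits lpconst.splits)
next
  case (Lam A M)
  have L: "phi N = Some N' \<Longrightarrow> phi (lift 0 N) = Some (lift 0 N')" for N :: "'s lpterm" and N' using phi_lift by blast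
  show ?case
  proof (intro conjI allI impI)
    fix k and N :: "'s lpterm" and N' M' :: "'s trm" assume a: "phi (Lam A M) = Some M'" "phi N = Some N'"
    then obtain A' M0 where "psi A = Some A'" "phi M = Some M0" "M' = Lam A' M0"
      by (auto split: option.splits)
    with Lam.IH a(2) L[OF a(2)] show "phi (subst (Lam A M) k N) = Some (subst M' k N')" by auto
  qed auto
next
  case (Pi A M)
  have L: "phi N = Some N' \<Longrightarrow> phi (lift 0 N) = Some (lift 0 N')" for N :: "'s lpterm" and N' using phi_lift by blast
  show ?case
  proof (intro conjI allI impI)
    fix k and N :: "'s lpterm" and N' M' :: "'s trm" assume a: "psi (Pi A M) = Some M'" "phi N = Some N'"
    then obtain A' M0 where "psi A = Some A'" "psi M = Some M0" "M' = Pi A' M0"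
      by (auto split: option.splits)
    with Pi.IH a(2) L[OF a(2)] show "psi (subst (Pi A M) k N) = Some (subst M' k N')" by auto
  qed auto
qed auto




lemma ctxc_rtr_appL: "(ctxc r)\<^sup>*\<^sup>* M M' \<Longrightarrow> (ctxc r)\<^sup>*\<^sup>* (App M N) (App M' N)"
  by (induction rule: rtranclp_induct) (auto intro: rtranclp.rtrancl_into_rtrancl ctxc.appL)
lemma ctxc_rtr_appR: "(ctxc r)\<^sup>*\<^sup>* N N' \<Longrightarrow> (ctxc r)\<^sup>*\<^sup>* (App M N) (App M N')"
  by (induction rule: rtranclp_induct) (auto intro: rtranclp.rtrancl_into_rtrancl ctxc.appR)
lemma ctxc_rtr_lamL: "(ctxc r)\<^sup>*\<^sup>* M M' \<Longrightarrow> (ctxc r)\<^sup>*\<^sup>* (Lam M N) (Lam M' N)"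
  by (induction rule: rtranclp_induct) (auto intro: rtranclp.rtrancl_into_rtrancl ctxc.lamL)
lemma ctxc_rtr_lamR: "(ctxc r)\<^sup>*\<^sup>* N N' \<Longrightarrow> (ctxc r)\<^sup>*\<^sup>* (Lam M N) (Lam M N')"
  by (induction rule: rtranclp_induct) (auto intro: rtranclp.rtrancl_into_rtrancl ctxc.lamR)
lemma ctxc_rtr_piL: "(ctxc r)\<^sup>*\<^sup>* M M' \<Longrightarrow> (ctxc r)\<^sup>*\<^sup>* (Pi M N) (Pi M' N)"
  by (induction rule: rtranclp_induct) (auto intro: rtranclp.rtrancl_into_rtrancl ctxc.piL)
lemma ctxc_rtr_piR: "(ctxc r)\<^sup>*\<^sup>* N N' \<Longrightarrow> (ctxc r)\<^sup>*\<^sup>* (Pi M N) (Pi M N')"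
  by (induction rule: rtranclp_induct) (auto intro: rtranclp.rtrancl_into_rtrancl ctxc.piR)

lemma ctxc_rtr_app: "(ctxc r)\<^sup>*\<^sup>* M M' \<Longrightarrow> (ctxc r)\<^sup>*\<^sup>* N N' \<Longrightarrow> (ctxc r)\<^sup>*\<^sup>* (App M N) (App M' N')"
  by (meson ctxc_rtr_appL ctxc_rtr_appR rtranclp_trans)
lemma ctxc_rtr_lam: "(ctxc r)\<^sup>*\<^sup>* M M' \<Longrightarrow> (ctxc r)\<^sup>*\<^sup>* N N' \<Longrightarrow> (ctxc r)\<^sup>*\<^sup>* (Lam M N) (Lam M' N')"
  by (meson ctxc_rtr_lamL ctxc_rtr_lamR rtranclp_trans)
lemma ctxc_rtr_pi: "(ctxc r)\<^sup>*\<^sup>* M M' \<Longrightarrow> (ctxc r)\<^sup>*\<^sup>* N N' \<Longrightarrow> (ctxc r)\<^sup>*\<^sup>* (Pi M N) (Pi M' N')"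
  by (meson ctxc_rtr_piL ctxc_rtr_piR rtranclp_trans)

lemma no_step_Atm: "ctxc (\<lambda>M N. beta_root M N \<or> R_root Ax Rl M N) (Atm c) X \<Longrightarrow> False"
  by (auto elim: ctxc.cases beta_root.cases R_root.cases)

lemma beta_step_root: "beta_step (App (Lam T M) N) (subst M 0 N)"
  unfolding beta_step_def by (intro ctxc.root beta_root.intros)

lemma phi_pi_red: "beta_step\<^sup>*\<^sup>* (App (App (phi_pi s1 s2) A') B') (Pi A' (App (lift 0 B') (Var 0)))"
proof -
  have 1: "beta_step (App (phi_pi s1 s2) A')
     (Lam (Pi A' (Atm s2)) (Pi (lift 0 A') (App (Var 1) (Var 0))))"
    unfolding phi_pi_def using beta_step_root[of "Atm s1" "Lam (Pi (Var 0) (Atm s2)) (Pi (Var 1) (App (Var 1) (Var 0)))" A'] by simp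
  have 2: "beta_step (App (Lam (Pi A' (Atm s2)) (Pi (lift 0 A') (App (Var 1) (Var 0)))) B')
     (Pi A' (App (lift 0 B') (Var 0)))"
    using beta_step_root[of "Pi A' (Atm s2)" "Pi (lift 0 A') (App (Var 1) (Var 0))" B'] by simp
  have h3: "beta_step (App (App (phi_pi s1 s2) A') B')
     (App (Lam (Pi A' (Atm s2)) (Pi (lift 0 A') (App (Var 1) (Var 0)))) B')"
    using 1 unfolding beta_step_def by (rule ctxc.appL)
  show ?thesis using h3 2 by auto
qed

lemma step_phi:
  fixes M N :: "'s lpterm"
  assumes "betaR_step Ax Rl M N"
  shows "(\<forall>M'. phi M = Some M' \<longrightarrow> (\<exists>N'. phi N = Some N' \<and> beta_step\<^sup>*\<^sup>* M' N')) \<and>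
         (\<forall>M'. psi M = Some M' \<longrightarrow> (\<exists>N'. psi N = Some N' \<and> beta_step\<^sup>*\<^sup>* M' N'))"
  using assms unfolding betaR_step_def
proof (induction rule: ctxc.induct)
  case (root M N)
  then show ?case
  proof
    assume "beta_root M N"
    then obtain A P Q where e: "M = App (Lam A P) Q" "N = subst P 0 Q" by (auto elim: beta_root.cases)
    show ?thesis
    proof (intro conjI allI impI)
      fix M' assume "phi M = Some M'"
      then obtain A' P' Q' where "psi A = Some A'" "phi P = Some P'" "phi Q = Some Q'"
        "M' = App (Lam A' P') Q'" using e by (auto split: option.splits)
      moreover have "beta_step M' (subst P' 0 Q')"
        unfolding beta_step_def using calculation by (auto intro: ctxc.root beta_root.intros)
      ultimately show "\<exists>N'. phi N = Some N' \<and> beta_step\<^sup>*\<^sup>* M' N'"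
        using phi_subst e by blast
    next
      fix M' assume "psi M = Some M'" then show "\<exists>N'. psi N = Some N' \<and> beta_step\<^sup>*\<^sup>* M' N'"
        using e by (simp add: psi_App)
    qed
  next
    assume "R_root Ax Rl M N"
    then show ?thesis
    proof cases
      case (ax s1 s2)
      then show ?thesis by (auto simp: psi_App)
    next
      case (rl s1 s2 s3 A B)
      show ?thesis
      proof (intro conjI allI impI)
        fix M' assume "phi M = Some M'" then show "\<exists>N'. phi N = Some N' \<and> beta_step\<^sup>*\<^sup>* M' N'"
          using rl by simp
      next
        fix M' assume "psi M = Some M'"
        then obtain A' B' where ab: "phi A = Some A'" "phi B = Some B'"
          "M' = App (App (phi_pi s1 s2) A') B'" using rl by (auto simp: psi_App split: option.splits)
        have "phi (lift 0 B) = Some (lift 0 B')" using ab phi_lift by blast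
        then have "psi N = Some (Pi A' (App (lift 0 B') (Var 0)))" using rl ab by (simp add: psi_App)
        moreover have "beta_step\<^sup>*\<^sup>* M' (Pi A' (App (lift 0 B') (Var 0)))"
          using ab(3) phi_pi_red by simp
        ultimately show "\<exists>N'. psi N = Some N' \<and> beta_step\<^sup>*\<^sup>* M' N'" by blast
      qed
    qed
  qed
next
  case (appL M M' N)
  show ?case
  proof (intro conjI allI impI)
    fix X assume "phi (App M N) = Some X"
    then show "\<exists>N'. phi (App M' N) = Some N' \<and> beta_step\<^sup>*\<^sup>* X N'"
      using appL.IH unfolding beta_step_def
      by (auto split: option.splits intro: ctxc_rtr_appL)
  next
    fix X assume "psi (App M N) = Some X"
    then obtain s where "M = Atm (Eps s)" by (auto simp: psi_App split: trm.splits lpconst.splits)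
    then show "\<exists>N'. psi (App M' N) = Some N' \<and> beta_step\<^sup>*\<^sup>* X N'"
      using appL.hyps no_step_Atm by metis
  qed
next
  case (appR N N' M)
  show ?case
  proof (intro conjI allI impI)
    fix X assume "phi (App M N) = Some X"
    then show "\<exists>Y. phi (App M N') = Some Y \<and> beta_step\<^sup>*\<^sup>* X Y"
      using appR.IH unfolding beta_step_def
      by (auto split: option.splits intro: ctxc_rtr_appR)
  next
    fix X assume "psi (App M N) = Some X"
    then show "\<exists>Y. psi (App M N') = Some Y \<and> beta_step\<^sup>*\<^sup>* X Y"
      using appR.IH by (auto simp: psi_App split: trm.splits lpconst.splits)
  qed
next
  case (lamL A A' M)
  then show ?case unfolding beta_step_def
    by (auto split: option.splits intro: ctxc_rtr_lamL)
next
  case (lamR M M' A)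
  then show ?case unfolding beta_step_def
    by (auto split: option.splits intro: ctxc_rtr_lamR)
next
  case (piL A A' B)
  then show ?case unfolding beta_step_def
    by (auto split: option.splits intro: ctxc_rtr_piL)
next
  case (piR B B' A)
  then show ?case unfolding beta_step_def
    by (auto split: option.splits intro: ctxc_rtr_piR)
qed

lemma steps_phi:
  fixes M N :: "'s lpterm"
  assumes "(betaR_step Ax Rl)\<^sup>*\<^sup>* M N"
  shows "(\<forall>M'. phi M = Some M' \<longrightarrow> (\<exists>N'. phi N = Some N' \<and> beta_step\<^sup>*\<^sup>* M' N')) \<and>
         (\<forall>M'. psi M = Some M' \<longrightarrow> (\<exists>N'. psi N = Some N' \<and> beta_step\<^sup>*\<^sup>* M' N'))"
  using assms
proof (induction rule: rtranclp_induct)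
  case (step y z)
  then show ?case using step_phi[OF step.hyps(2)] by (meson rtranclp_trans)
qed auto




inductive par :: "('s \<times> 's) set \<Rightarrow> ('s \<times> 's \<times> 's) set \<Rightarrow> 's lpterm \<Rightarrow> 's lpterm \<Rightarrow> bool"
  for Ax Rl where
  p_atm: "par Ax Rl (Atm c) (Atm c)"
| p_var: "par Ax Rl (Var i) (Var i)"
| p_app: "par Ax Rl M M' \<Longrightarrow> par Ax Rl N N' \<Longrightarrow> par Ax Rl (App M N) (App M' N')"
| p_lam: "par Ax Rl M M' \<Longrightarrow> par Ax Rl N N' \<Longrightarrow> par Ax Rl (Lam M N) (Lam M' N')"
| p_pi: "par Ax Rl M M' \<Longrightarrow> par Ax Rl N N' \<Longrightarrow> par Ax Rl (Pi M N) (Pi M' N')"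
| p_beta: "par Ax Rl M M' \<Longrightarrow> par Ax Rl N N' \<Longrightarrow> par Ax Rl (App (Lam A M) N) (subst M' 0 N')"
| p_ax: "(s1, s2) \<in> Ax \<Longrightarrow> par Ax Rl (App (Atm (Eps s2)) (Atm (Dot s1))) (Atm (U s1))"
| p_rl: "(s1, s2, s3) \<in> Rl \<Longrightarrow> par Ax Rl A A' \<Longrightarrow> par Ax Rl B B' \<Longrightarrow>
     par Ax Rl (App (Atm (Eps s3)) (App (App (Atm (PiC s1 s2 s3)) A) B))
       (Pi (App (Atm (Eps s1)) A') (App (Atm (Eps s2)) (App (lift 0 B') (Var 0))))"

lemma par_refl[simp, intro]: "par Ax Rl M M"
  by (induction M) (auto intro: par.intros)

lemma par_lift: "par Ax Rl M M' \<Longrightarrow> par Ax Rl (lift k M) (lift k M')"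
proof (induction arbitrary: k rule: par.induct)
  case (p_beta M M' N N' A)
  then show ?case using par.p_beta[of Ax Rl "lift (Suc k) M" "lift (Suc k) M'" "lift k N" "lift k N'" "lift k A"]
    by (simp add: lift_subst)
next
  case (p_rl s1 s2 s3 A A' B B')
  then show ?case using par.p_rl[of s1 s2 s3 Rl Ax "lift k A" "lift k A'" "lift k B" "lift k B'"]
    by (simp add: lift_lift)
qed (auto intro: par.intros)

lemma par_subst: "par Ax Rl M M' \<Longrightarrow> par Ax Rl N N' \<Longrightarrow> par Ax Rl (subst M k N) (subst M' k N')"
proof (induction arbitrary: k N N' rule: par.induct)
  case (p_beta M M' P P' A)
  then show ?case
    using par.p_beta[of Ax Rl "subst M (Suc k) (lift 0 N)" "subst M' (Suc k) (lift 0 N')"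
        "subst P k N" "subst P' k N'" "subst A k N"]
    by (simp add: subst_subst[of 0 k, symmetric] par_lift)
next
  case (p_rl s1 s2 s3 A A' B B')
  then show ?case using par.p_rl[of s1 s2 s3 Rl Ax "subst A k N" "subst A' k N'" "subst B k N" "subst B' k N'"]
    by (simp add: lift_subst_lt)
next
  case (p_lam M M' P P')
  then show ?case by (simp add: par.p_lam par_lift)
next
  case (p_pi M M' P P')
  then show ?case by (simp add: par.p_pi par_lift)
qed (auto intro: par.intros par_lift)




fun cd :: "('s \<times> 's) set \<Rightarrow> ('s \<times> 's \<times> 's) set \<Rightarrow> 's lpterm \<Rightarrow> 's lpterm" where
  "cd Ax Rl (App (Lam A M) N) = subst (cd Ax Rl M) 0 (cd Ax Rl N)"
| "cd Ax Rl (App (Atm (Eps s2)) (Atm (Dot s1))) =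
     (if (s1, s2) \<in> Ax then Atm (U s1) else App (Atm (Eps s2)) (Atm (Dot s1)))"
| "cd Ax Rl (App (Atm (Eps s3)) (App (App (Atm (PiC s1 s2 s3')) A) B)) =
     (if s3' = s3 \<and> (s1, s2, s3) \<in> Rl
      then Pi (App (Atm (Eps s1)) (cd Ax Rl A)) (App (Atm (Eps s2)) (App (lift 0 (cd Ax Rl B)) (Var 0)))
      else App (Atm (Eps s3)) (App (App (Atm (PiC s1 s2 s3')) (cd Ax Rl A)) (cd Ax Rl B)))"
| "cd Ax Rl (App M N) = App (cd Ax Rl M) (cd Ax Rl N)"
| "cd Ax Rl (Lam A M) = Lam (cd Ax Rl A) (cd Ax Rl M)"
| "cd Ax Rl (Pi A M) = Pi (cd Ax Rl A) (cd Ax Rl M)"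
| "cd Ax Rl t = t"



lemma cd_App_gen:
  assumes "\<And>A M0. M \<noteq> Lam A M0"
    and "\<And>s1 s2. (s1, s2) \<in> Ax \<Longrightarrow> M = Atm (Eps s2) \<Longrightarrow> N = Atm (Dot s1) \<Longrightarrow> False"
    and "\<And>s1 s2 s3 A B. (s1, s2, s3) \<in> Rl \<Longrightarrow> M = Atm (Eps s3) \<Longrightarrow>
           N = App (App (Atm (PiC s1 s2 s3)) A) B \<Longrightarrow> False"
  shows "cd Ax Rl (App M N) = App (cd Ax Rl M) (cd Ax Rl N)"
  using assms by (cases "(Ax, Rl, App M N)" rule: cd.cases) auto

inductive_cases par_AtmE: "par Ax Rl (Atm c) X"
inductive_cases par_LamE: "par Ax Rl (Lam A M) X"
inductive_cases par_PiE: "par Ax Rl (Pi A M) X"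
inductive_cases par_AppE: "par Ax Rl (App M N) X"

lemma par_PiC_inv: "par Ax Rl (App (App (Atm (PiC s1 s2 s3)) A) B) X \<Longrightarrow>
   \<exists>A' B'. X = App (App (Atm (PiC s1 s2 s3)) A') B' \<and> par Ax Rl A A' \<and> par Ax Rl B B'"
  by (elim par_AppE par_AtmE) auto




lemma par_cd: "par Ax Rl M N \<Longrightarrow> par Ax Rl N (cd Ax Rl M)"
proof (induction rule: par.induct)
  case (p_app M M' N N')
  show ?case
  proof (cases "\<exists>A M0. M = Lam A M0")
    case True
    then obtain A M0 where e: "M = Lam A M0" by blast
    from p_app.hyps(1) e obtain A' M0' where m: "M' = Lam A' M0'"
      by (blast elim: par_LamE)
    from p_app.IH(1) e m have "par Ax Rl (Lam A' M0') (Lam (cd Ax Rl A) (cd Ax Rl M0))"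
      by simp
    then have "par Ax Rl M0' (cd Ax Rl M0)"
      by (rule par_LamE) simp
    then have "par Ax Rl (App (Lam A' M0') N') (subst (cd Ax Rl M0) 0 (cd Ax Rl N))"
      using p_app.IH(2) by (rule par.p_beta)
    with e m show ?thesis by simp
  next
    case nl: False
    show ?thesis
    proof (cases "\<exists>s1 s2. (s1, s2) \<in> Ax \<and> M = Atm (Eps s2) \<and> N = Atm (Dot s1)")
      case True
      then obtain s1 s2 where r: "(s1, s2) \<in> Ax" "M = Atm (Eps s2)" "N = Atm (Dot s1)" by blast
      have "M' = M" using p_app.hyps(1) r(2) by (auto elim: par_AtmE)
      moreover have "N' = N" using p_app.hyps(2) r(3) by (auto elim: par_AtmE)
      ultimately have "M' = M" "N' = N" by auto
      with r show ?thesis by (simp add: par.p_ax)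
    next
      case na: False
      show ?thesis
      proof (cases "\<exists>s1 s2 s3 A B. (s1, s2, s3) \<in> Rl \<and> M = Atm (Eps s3) \<and> N = App (App (Atm (PiC s1 s2 s3)) A) B")
        case True
        then obtain s1 s2 s3 A B where r: "(s1, s2, s3) \<in> Rl" "M = Atm (Eps s3)"
          "N = App (App (Atm (PiC s1 s2 s3)) A) B" by blast
        have mm: "M' = M" using p_app.hyps(1) r(2) by (auto elim: par_AtmE)
        from par_PiC_inv[OF p_app.hyps(2)[unfolded r(3)]] obtain A' B' where ab: "N' = App (App (Atm (PiC s1 s2 s3)) A') B'"
          by blast
        have "cd Ax Rl N = App (App (Atm (PiC s1 s2 s3)) (cd Ax Rl A)) (cd Ax Rl B)"
          using r by simp
        with p_app.IH(2) ab have "par Ax Rl (App (App (Atm (PiC s1 s2 s3)) A') B') (App (App (Atm (PiC s1 s2 s3)) (cd Ax Rl A)) (cd Ax Rl B))"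
          by simp
        then have "par Ax Rl A' (cd Ax Rl A) \<and> par Ax Rl B' (cd Ax Rl B)"
          by (elim par_AppE par_AtmE) auto
        with r ab mm show ?thesis using par.p_rl[OF r(1)] by simp
      next
        case False
        then have "cd Ax Rl (App M N) = App (cd Ax Rl M) (cd Ax Rl N)"
          using nl na by (intro cd_App_gen) blast+
        with p_app.IH show ?thesis by (simp add: par.p_app)
      qed
    qed
  qed
next
  case (p_beta M M' N N' A)
  then show ?case by (simp add: par_subst)
next
  case (p_rl s1 s2 s3 A A' B B')
  then show ?case by (simp; intro par.p_pi par.p_app par_refl par_lift)
next
  case (p_lam M M' N N')
  then show ?case by (simp add: par.p_lam)
next
  case (p_pi M M' N N')
  then show ?case by (simp add: par.p_pi)
qed (simp_all add: par.p_atm par.p_var)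




lemma par_diamond: "par Ax Rl M N1 \<Longrightarrow> par Ax Rl M N2 \<Longrightarrow> \<exists>P. par Ax Rl N1 P \<and> par Ax Rl N2 P"
  using par_cd by blast

lemma par_strip: "(par Ax Rl)\<^sup>*\<^sup>* M N \<Longrightarrow> par Ax Rl M M2 \<Longrightarrow> \<exists>P. par Ax Rl N P \<and> (par Ax Rl)\<^sup>*\<^sup>* M2 P"
proof (induction arbitrary: M2 rule: rtranclp_induct)
  case base then show ?case by blast
next
  case (step y z)
  then obtain P where "par Ax Rl y P" "(par Ax Rl)\<^sup>*\<^sup>* M2 P" by blast
  moreover obtain Q where "par Ax Rl z Q" "par Ax Rl P Q" using par_diamond step.hyps(2) calculation(1) by blast
  ultimately show ?case by (meson rtranclp.rtrancl_into_rtrancl)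
qed

lemma par_conf: "(par Ax Rl)\<^sup>*\<^sup>* M N2 \<Longrightarrow> (par Ax Rl)\<^sup>*\<^sup>* M N1 \<Longrightarrow> \<exists>P. (par Ax Rl)\<^sup>*\<^sup>* N1 P \<and> (par Ax Rl)\<^sup>*\<^sup>* N2 P"
proof (induction arbitrary: N1 rule: rtranclp_induct)
  case base then show ?case by blast
next
  case (step y z)
  then obtain P where p: "(par Ax Rl)\<^sup>*\<^sup>* N1 P" "(par Ax Rl)\<^sup>*\<^sup>* y P" by blast
  then obtain Q where "par Ax Rl P Q" "(par Ax Rl)\<^sup>*\<^sup>* z Q" using par_strip step.hyps(2) by blast
  with p show ?case by (meson rtranclp.rtrancl_into_rtrancl)
qed

lemma step_par: "betaR_step Ax Rl M N \<Longrightarrow> par Ax Rl M N"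
  unfolding betaR_step_def
proof (induction rule: ctxc.induct)
  case (root M N)
  then show ?case
  proof
    assume "beta_root M N" then show ?thesis by cases (auto intro: par.p_beta)
  next
    assume "R_root Ax Rl M N" then show ?thesis by cases (auto intro: par.p_ax par.p_rl)
  qed
qed (auto intro: par.intros)

lemma par_steps: "par Ax Rl M N \<Longrightarrow> (betaR_step Ax Rl)\<^sup>*\<^sup>* M N"
  unfolding betaR_step_def
proof (induction rule: par.induct)
  case (p_beta M M' N N' A)
  have "(ctxc (\<lambda>M N. beta_root M N \<or> R_root Ax Rl M N))\<^sup>*\<^sup>* (App (Lam A M) N) (App (Lam A M') N')"
    using p_beta by (intro ctxc_rtr_app ctxc_rtr_lam) auto
  moreover have "ctxc (\<lambda>M N. beta_root M N \<or> R_root Ax Rl M N) (App (Lam A M') N') (subst M' 0 N')"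
    by (intro ctxc.root disjI1 beta_root.intros)
  ultimately show ?case by (rule rtranclp.rtrancl_into_rtrancl)
next
  case (p_ax s1 s2)
  then show ?case by (intro r_into_rtranclp ctxc.root disjI2 R_root.intros)
next
  case (p_rl s1 s2 s3 A A' B B')
  have "(ctxc (\<lambda>M N. beta_root M N \<or> R_root Ax Rl M N))\<^sup>*\<^sup>*
     (App (Atm (Eps s3)) (App (App (Atm (PiC s1 s2 s3)) A) B))
     (App (Atm (Eps s3)) (App (App (Atm (PiC s1 s2 s3)) A') B'))"
    using p_rl by (intro ctxc_rtr_app) auto
  moreover have "ctxc (\<lambda>M N. beta_root M N \<or> R_root Ax Rl M N)
     (App (Atm (Eps s3)) (App (App (Atm (PiC s1 s2 s3)) A') B'))
     (Pi (App (Atm (Eps s1)) A') (App (Atm (Eps s2)) (App (lift 0 B') (Var 0))))"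
    using p_rl by (intro ctxc.root disjI2 R_root.intros)
  ultimately show ?case by (rule rtranclp.rtrancl_into_rtrancl)
qed (auto intro: ctxc_rtr_app ctxc_rtr_lam ctxc_rtr_pi)

lemma steps_eq: "(betaR_step Ax Rl)\<^sup>*\<^sup>* = (par Ax Rl)\<^sup>*\<^sup>*"
  by (rule rtranclp_subset[symmetric]) (auto intro: step_par par_steps)

lemma CR: "betaR_conv Ax Rl M N \<Longrightarrow> \<exists>P. (betaR_step Ax Rl)\<^sup>*\<^sup>* M P \<and> (betaR_step Ax Rl)\<^sup>*\<^sup>* N P"
  unfolding betaR_conv_def
proof (induction rule: equivclp_induct)
  case base then show ?case by blast
next
  case (step y z)
  then obtain P where p: "(betaR_step Ax Rl)\<^sup>*\<^sup>* M P" "(betaR_step Ax Rl)\<^sup>*\<^sup>* y P" by blast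
  from step.hyps(2) show ?case
  proof
    assume "betaR_step Ax Rl y z"
    then have "(par Ax Rl)\<^sup>*\<^sup>* y z" "(par Ax Rl)\<^sup>*\<^sup>* y P" using p(2) steps_eq by (metis r_into_rtranclp)+
    then obtain Q where "(par Ax Rl)\<^sup>*\<^sup>* P Q" "(par Ax Rl)\<^sup>*\<^sup>* z Q" using par_conf by blast
    then show ?thesis using p(1) steps_eq by (metis rtranclp_trans)
  next
    assume "betaR_step Ax Rl z y"
    then show ?thesis using p by (meson converse_rtranclp_into_rtranclp)
  qed
qed

theorem lemma5p12:
  fixes S :: "'s set" and Ax :: "('s \<times> 's) set" and Rl :: "('s \<times> 's \<times> 's) set"
  assumes "functional_pts S Ax Rl"
  shows "(\<forall>M N M' N'. wf_lp S Ax Rl M \<and> wf_lp S Ax Rl N \<and> phi M = Some M' \<and> phi N = Some N'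
            \<and> betaR_conv Ax Rl M N \<longrightarrow> beta_conv M' N')
       \<and> (\<forall>A B A' B'. wf_lp S Ax Rl A \<and> wf_lp S Ax Rl B \<and> psi A = Some A' \<and> psi B = Some B'
            \<and> betaR_conv Ax Rl A B \<longrightarrow> beta_conv A' B')"
proof (intro conjI allI impI)
  fix M N :: "'s lpterm" and M' N'
  assume h: "wf_lp S Ax Rl M \<and> wf_lp S Ax Rl N \<and> phi M = Some M' \<and> phi N = Some N' \<and> betaR_conv Ax Rl M N"
  then obtain P where "(betaR_step Ax Rl)\<^sup>*\<^sup>* M P" "(betaR_step Ax Rl)\<^sup>*\<^sup>* N P" using CR by blast
  then obtain P1 P2 where "phi P = Some P1" "beta_step\<^sup>*\<^sup>* M' P1" "phi P = Some P2" "beta_step\<^sup>*\<^sup>* N' P2"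
    using steps_phi h by metis
  then show "beta_conv M' N'" unfolding beta_conv_def
    by (metis equivclp_sym equivclp_trans option.inject rtranclp_into_equivclp)
next
  fix M N :: "'s lpterm" and M' N'
  assume h: "wf_lp S Ax Rl M \<and> wf_lp S Ax Rl N \<and> psi M = Some M' \<and> psi N = Some N' \<and> betaR_conv Ax Rl M N"
  then obtain P where "(betaR_step Ax Rl)\<^sup>*\<^sup>* M P" "(betaR_step Ax Rl)\<^sup>*\<^sup>* N P" using CR by blast
  then obtain P1 P2 where "psi P = Some P1" "beta_step\<^sup>*\<^sup>* M' P1" "psi P = Some P2" "beta_step\<^sup>*\<^sup>* N' P2"
    using steps_phi h by metis
  then show "beta_conv M' N'" unfolding beta_conv_def
    by (metis equivclp_sym equivclp_trans option.inject rtranclp_into_equivclp)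
qed


end
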